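(* Let $(G,\mathcal F_\bullet G,\mathfrak R)$ be a filtered Rota–Baxter group. Then for every $n\ge1$ the map $\mathfrak R_n:\mathsf{gr}_nG\to\mathsf{gr}_nG$, $\mathfrak R_n(\bar x)=\overline{\mathfrak R(x)}$ for $x\in\mathcal F_nG$, is well defined and is a group homomorphism of $\mathsf{gr}_nG$.
   Context: For a group $G$ write $(x,y)=xyx^{-1}y^{-1}$; for subgroups $H,K$, $(H,K)$ is the subgroup generated by such commutators with $x\in H,y\in K$. A filtered group $(G,\mathcal F_\bullet G)$ is a group with subgroups $G=\mathcal F_1G\supset\mathcal F_2G\supset\cdots$ such that $(\mathcal F_nG,\mathcal F_mG)\subset\mathcal F_{n+m}G$; then each $\mathcal F_nG$ is normal in $G$ and $\mathsf{gr}_nG=\mathcal F_nG/\mathcal F_{n+1}G$ is an abelian group, written additively ($\bar x+\bar y=\overline{xy}$). A Rota–Baxter group is a group with a map $\mathfrak R$ such that $\mathfrak R(g)\mathfrak R(h)=\mathfrak R(g\mathfrak R(g)h\mathfrak R(g)^{-1})$ for all $g,h$; a filtered Rota–Baxter group is a filtered group with such an $\mathfrak R$ satisfying $\mathfrak R(\mathcal F_nG)\subset\mathcal F_nG$ for all $n\ge1$. *)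

theory Defs
  imports "HOL-Algebra.Algebra"
begin

definition grp_comm :: "('a, 'b) monoid_scheme \<Rightarrow> 'a \<Rightarrow> 'a \<Rightarrow> 'a" where
  "grp_comm G x y = x \<otimes>\<^bsub>G\<^esub> y \<otimes>\<^bsub>G\<^esub> inv\<^bsub>G\<^esub> x \<otimes>\<^bsub>G\<^esub> inv\<^bsub>G\<^esub> y"

definition comm_subgroup :: "('a, 'b) monoid_scheme \<Rightarrow> 'a set \<Rightarrow> 'a set \<Rightarrow> 'a set" where
  "comm_subgroup G H K = generate G {grp_comm G x y | x y. x \<in> H \<and> y \<in> K}"

text \<open>Filtration indexed by n >= 1; the value at index 0 is irrelevant.\<close>
definition filtered_group :: "('a, 'b) monoid_scheme \<Rightarrow> (nat \<Rightarrow> 'a set) \<Rightarrow> bool" where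
  "filtered_group G F \<longleftrightarrow> group G \<and> F 1 = carrier G
     \<and> (\<forall>n\<ge>1. subgroup (F n) G \<and> F (Suc n) \<subseteq> F n)
     \<and> (\<forall>n\<ge>1. \<forall>m\<ge>1. comm_subgroup G (F n) (F m) \<subseteq> F (n + m))"

definition rota_baxter :: "('a, 'b) monoid_scheme \<Rightarrow> ('a \<Rightarrow> 'a) \<Rightarrow> bool" where
  "rota_baxter G R \<longleftrightarrow> R \<in> carrier G \<rightarrow> carrier G \<and>
     (\<forall>g\<in>carrier G. \<forall>h\<in>carrier G.
        R g \<otimes>\<^bsub>G\<^esub> R h = R (g \<otimes>\<^bsub>G\<^esub> R g \<otimes>\<^bsub>G\<^esub> h \<otimes>\<^bsub>G\<^esub> inv\<^bsub>G\<^esub> (R g)))"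

definition filtered_rota_baxter ::
  "('a, 'b) monoid_scheme \<Rightarrow> (nat \<Rightarrow> 'a set) \<Rightarrow> ('a \<Rightarrow> 'a) \<Rightarrow> bool" where
  "filtered_rota_baxter G F R \<longleftrightarrow> filtered_group G F \<and> rota_baxter G R
     \<and> (\<forall>n\<ge>1. R ` F n \<subseteq> F n)"

definition gr :: "('a, 'b) monoid_scheme \<Rightarrow> (nat \<Rightarrow> 'a set) \<Rightarrow> nat \<Rightarrow> 'a set monoid" where
  "gr G F n = (G\<lparr>carrier := F n\<rparr>) Mod (F (Suc n))"

end

theory Submission
  imports Defs
begin

lemma r_coset_upd: "r_coset (G\<lparr>carrier := S\<rparr>) = r_coset G"
  by (rule ext, rule ext) (simp add: r_coset_def)

lemma set_mult_upd: "set_mult (G\<lparr>carrier := S\<rparr>) = set_mult G"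
  by (rule ext, rule ext) (simp add: set_mult_def)

lemma coset_eq_iff:
  assumes "group G" "subgroup N G" "x \<in> carrier G" "y \<in> carrier G"
  shows "(N #>\<^bsub>G\<^esub> x = N #>\<^bsub>G\<^esub> y) = (x \<otimes>\<^bsub>G\<^esub> inv\<^bsub>G\<^esub> y \<in> N)"
proof
  assume "N #>\<^bsub>G\<^esub> x = N #>\<^bsub>G\<^esub> y"
  then have "x \<in> N #>\<^bsub>G\<^esub> y" using group.rcos_self[OF assms(1) assms(3) assms(2)] by simp
  then show "x \<otimes>\<^bsub>G\<^esub> inv\<^bsub>G\<^esub> y \<in> N"
    using subgroup.rcos_module_imp[OF assms(2) assms(1) assms(4)] by blast
next
  assume "x \<otimes>\<^bsub>G\<^esub> inv\<^bsub>G\<^esub> y \<in> N"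
  then have "x \<in> N #>\<^bsub>G\<^esub> y"
    using subgroup.rcos_module_rev[OF assms(2) assms(1) assms(4) assms(3)] by blast
  then show "N #>\<^bsub>G\<^esub> x = N #>\<^bsub>G\<^esub> y"
    using group.repr_independence[OF assms(1) _ assms(4) assms(2)] by metis
qed

lemma (in group) cancel1: "a \<in> carrier G \<Longrightarrow> b \<in> carrier G \<Longrightarrow> a \<otimes> (inv a \<otimes> b) = b"
  by (simp add: m_assoc[symmetric])

lemma (in group) cancel2: "a \<in> carrier G \<Longrightarrow> b \<in> carrier G \<Longrightarrow> inv a \<otimes> (a \<otimes> b) = b"
  by (simp add: m_assoc[symmetric])

lemma (in group) main:
  fixes F :: "nat \<Rightarrow> 'a set" and R :: "'a \<Rightarrow> 'a" and n :: nat
  assumes "filtered_rota_baxter G F R" and "n \<ge> 1"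
  shows "(\<forall>x\<in>F n. \<forall>y\<in>F n. F (Suc n) #>\<^bsub>G\<^esub> x = F (Suc n) #>\<^bsub>G\<^esub> y
            \<longrightarrow> F (Suc n) #>\<^bsub>G\<^esub> R x = F (Suc n) #>\<^bsub>G\<^esub> R y)
       \<and> (\<exists>f \<in> hom (gr G F n) (gr G F n).
            \<forall>x\<in>F n. f (F (Suc n) #>\<^bsub>G\<^esub> x) = F (Suc n) #>\<^bsub>G\<^esub> R x)"
proof -
  have grp: "group G" and F1: "F 1 = carrier G"
    and sub: "\<And>k. k \<ge> 1 \<Longrightarrow> subgroup (F k) G"
    and dec: "\<And>k. k \<ge> 1 \<Longrightarrow> F (Suc k) \<subseteq> F k"
    and cs: "\<And>k m. k \<ge> 1 \<Longrightarrow> m \<ge> 1 \<Longrightarrow> comm_subgroup G (F k) (F m) \<subseteq> F (k + m)"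
    and RB: "\<And>g h. g \<in> carrier G \<Longrightarrow> h \<in> carrier G \<Longrightarrow>
        R g \<otimes>\<^bsub>G\<^esub> R h = R (g \<otimes>\<^bsub>G\<^esub> R g \<otimes>\<^bsub>G\<^esub> h \<otimes>\<^bsub>G\<^esub> inv\<^bsub>G\<^esub> (R g))"
    using assms(1) unfolding filtered_rota_baxter_def filtered_group_def rota_baxter_def by auto
  have RF: "\<And>k x. k \<ge> 1 \<Longrightarrow> x \<in> F k \<Longrightarrow> R x \<in> F k"
    using assms(1) unfolding filtered_rota_baxter_def by blast
  have comm: "grp_comm G x y \<in> F (k + m)" if "k \<ge> 1" "m \<ge> 1" "x \<in> F k" "y \<in> F m" for k m x y
    using cs[OF that(1,2)] that unfolding comm_subgroup_def by (blast intro: generate.incl)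
  have mono: "F m \<subseteq> F k" if "1 \<le> k" "k \<le> m" for k m
    using that(2,1)
  proof (induction m rule: dec_induct)
    case base then show ?case by simp
  next
    case (step m) then show ?case using dec[of m] by auto
  qed
  have Fc: "F k \<subseteq> carrier G" if "k \<ge> 1" for k using sub[OF that] subgroup.subset by blast
  have normal: "F k \<lhd> G" if "k \<ge> 1" for k
    unfolding normal_inv_iff
  proof (intro conjI ballI)
    show "subgroup (F k) G" by (rule sub[OF that])
    fix g h assume g: "g \<in> carrier G" and h: "h \<in> F k"
    have hc: "h \<in> carrier G" using h Fc[OF that] by blast
    have "grp_comm G g h \<in> F (1 + k)" using comm[of 1 k g h] g h that F1 by simp
    then have c: "grp_comm G g h \<in> F k" using mono[of k "1+k"] that by auto
    have "g \<otimes> h \<otimes> inv g = grp_comm G g h \<otimes> h"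
      using g hc by (simp add: grp_comm_def m_assoc)
    then show "g \<otimes> h \<otimes> inv g \<in> F k"
      using c h sub[OF that] by (simp add: subgroup.m_closed)
  qed
  define N where "N = F (Suc n)"
  have nN: "N \<lhd> G" unfolding N_def using normal[of "Suc n"] by simp
  have sN: "subgroup N G" unfolding N_def using sub[of "Suc n"] by simp
  have Nc: "N \<subseteq> carrier G" using sN subgroup.subset by blast
  have Fn: "F n \<subseteq> carrier G" using Fc assms(2) by blast
  have conj: "g \<otimes> h \<otimes> inv g \<in> N" if "g \<in> carrier G" "h \<in> N" for g h
    using normal.inv_op_closed2[OF nN that] .
  have WD: "R x \<otimes> inv (R y) \<in> N" if x: "x \<in> F n" and y: "y \<in> F n" and xy: "x \<otimes> inv y \<in> N" for x y
  proof -
    have xc: "x \<in> carrier G" and yc: "y \<in> carrier G" using x y Fn by auto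
    have Ry: "R y \<in> F n" using RF assms(2) y by blast
    have Ryc: "R y \<in> carrier G" using Ry Fn by auto
    have yic: "inv y \<in> carrier G" using yc by simp
    have "inv y \<otimes> (x \<otimes> inv y) \<otimes> inv (inv y) \<in> N" using conj[OF yic xy] .
    moreover have "inv y \<otimes> (x \<otimes> inv y) \<otimes> inv (inv y) = inv y \<otimes> x"
      using xc yc by (simp add: m_assoc cancel1 cancel2)
    ultimately have yx: "inv y \<otimes> x \<in> N" by simp
    have Ryic: "inv (R y) \<in> carrier G" using Ryc by simp
    define h where "h = inv (R y) \<otimes> (inv y \<otimes> x) \<otimes> inv (inv (R y))"
    have hN: "h \<in> N" unfolding h_def using conj[OF Ryic yx] .
    have hc: "h \<in> carrier G" using hN Nc by auto
    have RhN: "R h \<in> N" using RF[of "Suc n" h] hN unfolding N_def by simp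
    have Rhc: "R h \<in> carrier G" using RhN Nc by auto
    have "y \<otimes> R y \<otimes> h \<otimes> inv (R y) = x"
      unfolding h_def using xc yc Ryc by (simp add: m_assoc cancel1 cancel2)
    then have eq: "R y \<otimes> R h = R x" using RB[OF yc hc] by simp
    have "R x \<otimes> inv (R y) = R y \<otimes> R h \<otimes> inv (R y)" using eq by simp
    moreover have "R y \<otimes> R h \<otimes> inv (R y) \<in> N" using conj[OF Ryc RhN] .
    ultimately show ?thesis by simp
  qed
  have WD2: "N #> R x = N #> R y" if x: "x \<in> F n" and y: "y \<in> F n" and e: "N #> x = N #> y" for x y
  proof -
    have "x \<otimes> inv y \<in> N" using e coset_eq_iff[OF grp sN] x y Fn by blast
    then have "R x \<otimes> inv (R y) \<in> N" using WD x y by blast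
    moreover have "R x \<in> carrier G" "R y \<in> carrier G" using x y RF assms(2) Fn by auto
    ultimately show ?thesis using coset_eq_iff[OF grp sN] by blast
  qed
  have HOMEQ: "N #> (R x \<otimes> R y) = N #> R (x \<otimes> y)" if x: "x \<in> F n" and y: "y \<in> F n" for x y
  proof -
    have xc: "x \<in> carrier G" and yc: "y \<in> carrier G" using x y Fn by auto
    have Rx: "R x \<in> F n" using RF assms(2) x by blast
    have Rxc: "R x \<in> carrier G" using Rx Fn by auto
    define z where "z = x \<otimes> R x \<otimes> y \<otimes> inv (R x)"
    have zF: "z \<in> F n" unfolding z_def using sub[OF assms(2)] x y Rx
      by (simp add: subgroup.m_closed subgroup.m_inv_closed)
    have xyF: "x \<otimes> y \<in> F n" using sub[OF assms(2)] x y by (simp add: subgroup.m_closed)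
    have "grp_comm G (R x) y \<in> F (n + n)" using comm[OF assms(2) assms(2) Rx y] .
    then have cN: "grp_comm G (R x) y \<in> N" unfolding N_def using mono[of "Suc n" "n+n"] assms(2) by auto
    have "z \<otimes> inv (x \<otimes> y) = x \<otimes> grp_comm G (R x) y \<otimes> inv x"
      unfolding z_def grp_comm_def using xc yc Rxc by (simp add: m_assoc inv_mult_group cancel1 cancel2)
    then have "z \<otimes> inv (x \<otimes> y) \<in> N" using conj[OF xc cN] by simp
    then have "R z \<otimes> inv (R (x \<otimes> y)) \<in> N" using WD zF xyF by blast
    moreover have "R z \<in> carrier G" "R (x \<otimes> y) \<in> carrier G" using zF xyF RF assms(2) Fn by auto
    ultimately have "N #> R z = N #> R (x \<otimes> y)" using coset_eq_iff[OF grp sN] by blast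
    moreover have "R x \<otimes> R y = R z" unfolding z_def using RB[OF xc yc] by simp
    ultimately show ?thesis by simp
  qed
  define f where "f C = N #> R (SOME x. x \<in> F n \<and> C = N #> x)" for C
  have fx: "f (N #> x) = N #> R x" if x: "x \<in> F n" for x
  proof -
    have "\<exists>x'. x' \<in> F n \<and> N #> x = N #> x'" using x by blast
    then have "(SOME x'. x' \<in> F n \<and> N #> x = N #> x') \<in> F n \<and> N #> x = N #> (SOME x'. x' \<in> F n \<and> N #> x = N #> x')"
      by (rule someI_ex)
    then show ?thesis unfolding f_def using WD2 x by metis
  qed
  have carr: "carrier (gr G F n) = {N #> x | x. x \<in> F n}"
    unfolding gr_def N_def FactGroup_def RCOSETS_def by (auto simp: r_coset_upd)
  have mult: "monoid.mult (gr G F n) = set_mult G"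
    unfolding gr_def by (simp add: set_mult_upd)
  have "f \<in> hom (gr G F n) (gr G F n)"
  proof (rule homI)
    fix C assume "C \<in> carrier (gr G F n)"
    then obtain x where x: "x \<in> F n" "C = N #> x" using carr by blast
    have "R x \<in> F n" using RF[OF assms(2) x(1)] .
    moreover have "f C = N #> R x" using fx[OF x(1)] x(2) by simp
    ultimately show "f C \<in> carrier (gr G F n)" unfolding carr by blast
  next
    fix C D assume C: "C \<in> carrier (gr G F n)" and D: "D \<in> carrier (gr G F n)"
    from C obtain x where x: "x \<in> F n" "C = N #> x" unfolding carr by blast
    from D obtain y where y: "y \<in> F n" "D = N #> y" unfolding carr by blast
    have xc: "x \<in> carrier G" and yc: "y \<in> carrier G" using x y Fn by auto
    have Rc: "R x \<in> carrier G" "R y \<in> carrier G" using RF[OF assms(2) x(1)] RF[OF assms(2) y(1)] Fn by auto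
    have "C <#> D = N #> (x \<otimes> y)" using x y normal.rcos_sum[OF nN xc yc] by simp
    moreover have "x \<otimes> y \<in> F n" using sub[OF assms(2)] x y by (simp add: subgroup.m_closed)
    ultimately have "f (C <#> D) = N #> R (x \<otimes> y)" using fx by metis
    also have "\<dots> = N #> (R x \<otimes> R y)" using HOMEQ[OF x(1) y(1)] by simp
    also have "\<dots> = (N #> R x) <#> (N #> R y)" using normal.rcos_sum[OF nN Rc] by simp
    also have "\<dots> = f C <#> f D" using fx[OF x(1)] fx[OF y(1)] x(2) y(2) by simp
    finally show "f (C \<otimes>\<^bsub>gr G F n\<^esub> D) = f C \<otimes>\<^bsub>gr G F n\<^esub> f D" using mult by simp
  qed
  then show ?thesis using WD2 fx unfolding N_def by blast
qed


theorem proposition5p10: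
  fixes G :: "('a, 'b) monoid_scheme" and F :: "nat \<Rightarrow> 'a set" and R :: "'a \<Rightarrow> 'a" and n :: nat
  assumes "filtered_rota_baxter G F R" and "n \<ge> 1"
  shows "(\<forall>x\<in>F n. \<forall>y\<in>F n. F (Suc n) #>\<^bsub>G\<^esub> x = F (Suc n) #>\<^bsub>G\<^esub> y
            \<longrightarrow> F (Suc n) #>\<^bsub>G\<^esub> R x = F (Suc n) #>\<^bsub>G\<^esub> R y)
       \<and> (\<exists>f \<in> hom (gr G F n) (gr G F n).
            \<forall>x\<in>F n. f (F (Suc n) #>\<^bsub>G\<^esub> x) = F (Suc n) #>\<^bsub>G\<^esub> R x)"
proof -
  have "group G" using assms(1) unfolding filtered_rota_baxter_def filtered_group_def by blast
  then show ?thesis using group.main[OF _ assms] by blast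
qed

end
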